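(* For $k=1,\dots,K$ let $\Delta U_k=U_{wk}-U_{lk}$, $\Delta\tau=\tau_w-\tau_l$ and $D_k=(\Delta U_k-\Delta\tau)/\sqrt{\mathbf V(\Delta U_k)}$, where $$\mathbf V(\Delta U_k)=\frac{n_k-1}{m_kn_k}\big(\xi^{10}_{ww}+\xi^{10}_{ll}-2\xi^{10}_{wl}\big)+\frac{m_k-1}{m_kn_k}\big(\xi^{01}_{ww}+\xi^{01}_{ll}-2\xi^{01}_{wl}\big)+\frac{1}{m_kn_k}\big(\xi^{11}_{ww}+\xi^{11}_{ll}-2\xi^{11}_{wl}\big)>0.$$ Then for any $1\le p<q\le K$ (with nested samples as described), $\mathbf{Cov}(\Delta U_p,\Delta U_q)=\mathbf V(\Delta U_q)$, and consequently $\mathbf{Cov}(D_p,D_q)=\sqrt{\mathbf V(\Delta U_q)/\mathbf V(\Delta U_p)}$.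
   Context: Two-arm setting. Treatment-arm observations $\mathcal D_1,\mathcal D_2,\dots$ are i.i.d. copies of a random element $\mathcal D$, control-arm observations $\mathcal D'_1,\mathcal D'_2,\dots$ are i.i.d. copies of $\mathcal D'$, and the two sequences are mutually independent. Each observation is a vector of $Q$ outcomes ordered by clinical priority, $\mathcal D=(D_1,\dots,D_Q)$. For a treatment observation $\mathcal D_i$ and control observation $\mathcal D'_j$, per-component win/loss indicators $W^{ij}_q,L^{ij}_q\in\{0,1\}$ (never both 1) are defined by type: binary: $W=\mathbb 1\{D_{qi}>D'_{qj}\}$, $L=\mathbb 1\{D_{qi}<D'_{qj}\}$; continuous/ordinal with margin $\epsilon_q\ge0$: $W=\mathbb 1\{D_{qi}>D'_{qj}+\epsilon_q\}$, $L=\mathbb 1\{D_{qi}<D'_{qj}-\epsilon_q\}$; time-to-event $D_q=(Y_q,\delta_q)$ (observed time, event indicator): $W=\delta'_{qj}\mathbb 1\{Y_{qi}>Y'_{qj}\}$, $L=\delta_{qi}\mathbb 1\{Y_{qi}<Y'_{qj}\}$. Tie indicator $\Omega^{ij}_q=(1-W^{ij}_q)(1-L^{ij}_q)$. Win and loss kernels: $\varphi_w(\mathcal D_i;\mathcal D'_j)=W^{ij}_1+\sum_{q=2}^Q\big(\prod_{p=1}^{q-1}\Omega^{ij}_p\big)W^{ij}_q$, $\varphi_l(\mathcal D_i;\mathcal D'_j)=L^{ij}_1+\sum_{q=2}^Q\big(\prod_{p=1}^{q-1}\Omega^{ij}_p\big)L^{ij}_q$. Let $\tau_\nu=\mathbf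 E\varphi_\nu(\mathcal D_1;\mathcal D'_1)$. For $u,v\in\{w,l\}$: $\xi^{10}_{uv}=\mathbf{Cov}[\varphi_u(\mathcal D_1;\mathcal D'_1),\varphi_v(\mathcal D_1;\mathcal D'_2)]$, $\xi^{01}_{uv}=\mathbf{Cov}[\varphi_u(\mathcal D_1;\mathcal D'_1),\varphi_v(\mathcal D_2;\mathcal D'_1)]$, $\xi^{11}_{uv}=\mathbf{Cov}[\varphi_u(\mathcal D_1;\mathcal D'_1),\varphi_v(\mathcal D_1;\mathcal D'_1)]$. Group sequential design with $K$ analyses: at analysis $k$ the data are the first $m_k$ treatment and first $n_k$ control observations, $0=m_0<m_1<\dots<m_K$, $0=n_0<n_1<\dots<n_K$. Sequential win/loss statistics: $U_{\nu k}=\frac{1}{m_kn_k}\sum_{i=1}^{m_k}\sum_{j=1}^{n_k}\varphi_\nu(\mathcal D_i;\mathcal D'_j)$ for $\nu\in\{w,l\}$. *)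

theory Defs
  imports "HOL-Probability.Probability"
begin

text \<open>Binary and continuous/ordinal components
store their value in the real field of the pair (the boolean is ignored);
a time-to-event component stores the observed time Y in the real field and
the event indicator delta in the boolean field.\<close>

datatype outcome_kind = Binary | Margin real | TTE

type_synonym obs = "nat \<Rightarrow> real \<times> bool"

definition obs_space :: "nat \<Rightarrow> obs measure" where
  "obs_space Q = PiM {1..Q} (\<lambda>_. borel \<Otimes>\<^sub>M count_space UNIV)"

definition win_ind :: "(nat \<Rightarrow> outcome_kind) \<Rightarrow> nat \<Rightarrow> obs \<Rightarrow> obs \<Rightarrow> real" where
  "win_ind kind q x y = (case kind q of
      Binary \<Rightarrow> (if fst (x q) > fst (y q) then 1 else 0)
    | Margin e \<Rightarrow> (if fst (x q) > fst (y q) + e then 1 else 0)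
    | TTE \<Rightarrow> (if snd (y q) \<and> fst (x q) > fst (y q) then 1 else 0))"

definition loss_ind :: "(nat \<Rightarrow> outcome_kind) \<Rightarrow> nat \<Rightarrow> obs \<Rightarrow> obs \<Rightarrow> real" where
  "loss_ind kind q x y = (case kind q of
      Binary \<Rightarrow> (if fst (x q) < fst (y q) then 1 else 0)
    | Margin e \<Rightarrow> (if fst (x q) < fst (y q) - e then 1 else 0)
    | TTE \<Rightarrow> (if snd (x q) \<and> fst (x q) < fst (y q) then 1 else 0))"

definition tie_ind :: "(nat \<Rightarrow> outcome_kind) \<Rightarrow> nat \<Rightarrow> obs \<Rightarrow> obs \<Rightarrow> real" where
  "tie_ind kind q x y = (1 - win_ind kind q x y) * (1 - loss_ind kind q x y)"

definition phi_w :: "nat \<Rightarrow> (nat \<Rightarrow> outcome_kind) \<Rightarrow> obs \<Rightarrow> obs \<Rightarrow> real" where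
  "phi_w Q kind x y =
     (\<Sum>q\<in>{1..Q}. (\<Prod>p\<in>{1..<q}. tie_ind kind p x y) * win_ind kind q x y)"

definition phi_l :: "nat \<Rightarrow> (nat \<Rightarrow> outcome_kind) \<Rightarrow> obs \<Rightarrow> obs \<Rightarrow> real" where
  "phi_l Q kind x y =
     (\<Sum>q\<in>{1..Q}. (\<Prod>p\<in>{1..<q}. tie_ind kind p x y) * loss_ind kind q x y)"

definition (in prob_space) covariance :: "('a \<Rightarrow> real) \<Rightarrow> ('a \<Rightarrow> real) \<Rightarrow> real" where
  "covariance X Y = expectation (\<lambda>\<omega>. (X \<omega> - expectation X) * (Y \<omega> - expectation Y))"

end

theory Submission imports Defs begin

lemma comp_meas:
  assumes "q \<in> {1..Q}"
  shows "(\<lambda>z::obs\<times>obs. fst z q) \<in> measurable (obs_space Q \<Otimes>\<^sub>M obs_space Q) (borel \<Otimes>\<^sub>M count_space UNIV)"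
    "(\<lambda>z::obs\<times>obs. snd z q) \<in> measurable (obs_space Q \<Otimes>\<^sub>M obs_space Q) (borel \<Otimes>\<^sub>M count_space UNIV)"
  using assms unfolding obs_space_def by measurable

lemma win_meas:
  assumes "q \<in> {1..Q}"
  shows "(\<lambda>z. win_ind kind q (fst z) (snd z)) \<in> borel_measurable (obs_space Q \<Otimes>\<^sub>M obs_space Q)"
proof -
  note [measurable] = comp_meas[OF assms]
  show ?thesis unfolding win_ind_def
    by (cases "kind q") simp_all
qed

lemma loss_meas:
  assumes "q \<in> {1..Q}"
  shows "(\<lambda>z. loss_ind kind q (fst z) (snd z)) \<in> borel_measurable (obs_space Q \<Otimes>\<^sub>M obs_space Q)"
proof -
  note [measurable] = comp_meas[OF assms]
  show ?thesis unfolding loss_ind_def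
    by (cases "kind q") simp_all
qed

lemma tie_meas:
  assumes "q \<in> {1..Q}"
  shows "(\<lambda>z. tie_ind kind q (fst z) (snd z)) \<in> borel_measurable (obs_space Q \<Otimes>\<^sub>M obs_space Q)"
  unfolding tie_ind_def using win_meas[OF assms] loss_meas[OF assms] by measurable

lemma phi_w_meas: "(\<lambda>z. phi_w Q kind (fst z) (snd z)) \<in> borel_measurable (obs_space Q \<Otimes>\<^sub>M obs_space Q)"
  unfolding phi_w_def
  by (intro borel_measurable_sum borel_measurable_times borel_measurable_prod win_meas tie_meas) auto

lemma phi_l_meas: "(\<lambda>z. phi_l Q kind (fst z) (snd z)) \<in> borel_measurable (obs_space Q \<Otimes>\<^sub>M obs_space Q)"
  unfolding phi_l_def
  by (intro borel_measurable_sum borel_measurable_times borel_measurable_prod loss_meas tie_meas) auto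

lemma win_bnd: "0 \<le> win_ind kind q x y" "win_ind kind q x y \<le> 1"
  unfolding win_ind_def by (auto split: outcome_kind.split)
lemma loss_bnd: "0 \<le> loss_ind kind q x y" "loss_ind kind q x y \<le> 1"
  unfolding loss_ind_def by (auto split: outcome_kind.split)
lemma tie_bnd: "0 \<le> tie_ind kind q x y" "tie_ind kind q x y \<le> 1"
  unfolding tie_ind_def using win_bnd[of kind q x y] loss_bnd[of kind q x y]
  by (auto intro: mult_nonneg_nonneg mult_le_one)

lemma term_bnd: "0 \<le> (\<Prod>p\<in>A. tie_ind kind p x y) * c" "(\<Prod>p\<in>A. tie_ind kind p x y) * c \<le> 1"
  if "0 \<le> c" "c \<le> 1"
  using that tie_bnd
  by (auto intro!: mult_nonneg_nonneg mult_le_one prod_nonneg prod_le_1)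

lemma phi_w_bnd: "\<bar>phi_w Q kind x y\<bar> \<le> real Q"
proof -
  have "0 \<le> phi_w Q kind x y" unfolding phi_w_def
    by (intro sum_nonneg term_bnd win_bnd)
  moreover have "phi_w Q kind x y \<le> (\<Sum>q\<in>{1..Q}. 1)" unfolding phi_w_def
    by (intro sum_mono term_bnd win_bnd)
  ultimately show ?thesis by simp
qed

lemma phi_l_bnd: "\<bar>phi_l Q kind x y\<bar> \<le> real Q"
proof -
  have "0 \<le> phi_l Q kind x y" unfolding phi_l_def
    by (intro sum_nonneg term_bnd loss_bnd)
  moreover have "phi_l Q kind x y \<le> (\<Sum>q\<in>{1..Q}. 1)" unfolding phi_l_def
    by (intro sum_mono term_bnd loss_bnd)
  ultimately show ?thesis by simp
qed

context prob_space begin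

lemma indep_sub:
  assumes ind: "indep_vars (\<lambda>_. S) X I" and AB: "A \<inter> B = {}" "A \<subseteq> I" "B \<subseteq> I"
    and f: "f \<in> measurable (PiM A (\<lambda>_. S)) N1" and g: "g \<in> measurable (PiM B (\<lambda>_. S)) N2"
  shows "indep_var N1 (\<lambda>\<omega>. f (restrict (\<lambda>i. X i \<omega>) A)) N2 (\<lambda>\<omega>. g (restrict (\<lambda>i. X i \<omega>) B))"
  using indep_var_compose[OF indep_var_restrict[OF ind AB] f g] by (simp add: comp_def)

lemma indep_integral:
  fixes g :: "_ \<Rightarrow> real"
  assumes "indep_var S X T Y" "g \<in> borel_measurable (S \<Otimes>\<^sub>M T)"
  shows "(\<integral>\<omega>. g (X \<omega>, Y \<omega>) \<partial>M) = integral\<^sup>L (distr M S X \<Otimes>\<^sub>M distr M T Y) g"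
proof -
  have rv: "random_variable S X" "random_variable T Y"
    and eq: "distr M S X \<Otimes>\<^sub>M distr M T Y = distr M (S \<Otimes>\<^sub>M T) (\<lambda>x. (X x, Y x))"
    using assms(1) unfolding indep_var_distribution_eq by auto
  show ?thesis unfolding eq
    using integral_distr[OF measurable_Pair[OF rv] assms(2)] by simp
qed

lemma indep_pair_pair:
  assumes "indep_var S X T Y"
  shows "distr M (S \<Otimes>\<^sub>M T) (\<lambda>x. (X x, Y x)) = distr M S X \<Otimes>\<^sub>M distr M T Y"
  using assms unfolding indep_var_distribution_eq by auto

lemma T2:
  assumes ind: "indep_vars (\<lambda>_. S) (case_sum D D') UNIV"
  shows "indep_var S (D i) S (D' j)"
proof -
  have "indep_var S (\<lambda>\<omega>. (\<lambda>h. h (Inl i)) (restrict (\<lambda>k. case_sum D D' k \<omega>) {Inl i}))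
                  S (\<lambda>\<omega>. (\<lambda>h. h (Inr j)) (restrict (\<lambda>k. case_sum D D' k \<omega>) {Inr j}))"
    by (rule indep_sub[OF ind]) (auto intro: measurable_component_singleton)
  then show ?thesis by simp
qed

lemma T3a:
  assumes ind: "indep_vars (\<lambda>_. S) (case_sum D D') UNIV" and "j \<noteq> j'"
  shows "indep_var (S \<Otimes>\<^sub>M S) (\<lambda>\<omega>. (D i \<omega>, D i \<omega>)) (S \<Otimes>\<^sub>M S) (\<lambda>\<omega>. (D' j \<omega>, D' j' \<omega>))"
proof -
  have "indep_var (S \<Otimes>\<^sub>M S) (\<lambda>\<omega>. (\<lambda>h. (h (Inl i), h (Inl i))) (restrict (\<lambda>k. case_sum D D' k \<omega>) {Inl i}))
                  (S \<Otimes>\<^sub>M S) (\<lambda>\<omega>. (\<lambda>h. (h (Inr j), h (Inr j'))) (restrict (\<lambda>k. case_sum D D' k \<omega>) {Inr j, Inr j'}))"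
    by (rule indep_sub[OF ind]) (auto intro!: measurable_component_singleton measurable_Pair)
  then show ?thesis by simp
qed

lemma T3a':
  assumes ind: "indep_vars (\<lambda>_. S) (case_sum D D') UNIV" and "j \<noteq> j'"
  shows "indep_var S (D' j) S (D' j')"
proof -
  have "indep_var S (\<lambda>\<omega>. (\<lambda>h. h (Inr j)) (restrict (\<lambda>k. case_sum D D' k \<omega>) {Inr j}))
                  S (\<lambda>\<omega>. (\<lambda>h. h (Inr j')) (restrict (\<lambda>k. case_sum D D' k \<omega>) {Inr j'}))"
    using assms(2) by (intro indep_sub[OF ind]) (auto intro: measurable_component_singleton)
  then show ?thesis by simp
qed

lemma T3b:
  assumes ind: "indep_vars (\<lambda>_. S) (case_sum D D') UNIV" and "i \<noteq> i'"
  shows "indep_var (S \<Otimes>\<^sub>M S) (\<lambda>\<omega>. (D' j \<omega>, D' j \<omega>)) (S \<Otimes>\<^sub>M S) (\<lambda>\<omega>. (D i \<omega>, D i' \<omega>))"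
proof -
  have "indep_var (S \<Otimes>\<^sub>M S) (\<lambda>\<omega>. (\<lambda>h. (h (Inr j), h (Inr j))) (restrict (\<lambda>k. case_sum D D' k \<omega>) {Inr j}))
                  (S \<Otimes>\<^sub>M S) (\<lambda>\<omega>. (\<lambda>h. (h (Inl i), h (Inl i'))) (restrict (\<lambda>k. case_sum D D' k \<omega>) {Inl i, Inl i'}))"
    by (rule indep_sub[OF ind]) (auto intro!: measurable_component_singleton measurable_Pair)
  then show ?thesis by simp
qed

lemma T3b':
  assumes ind: "indep_vars (\<lambda>_. S) (case_sum D D') UNIV" and "i \<noteq> i'"
  shows "indep_var S (D i) S (D i')"
proof -
  have "indep_var S (\<lambda>\<omega>. (\<lambda>h. h (Inl i)) (restrict (\<lambda>k. case_sum D D' k \<omega>) {Inl i}))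
                  S (\<lambda>\<omega>. (\<lambda>h. h (Inl i')) (restrict (\<lambda>k. case_sum D D' k \<omega>) {Inl i'}))"
    using assms(2) by (intro indep_sub[OF ind]) (auto intro: measurable_component_singleton)
  then show ?thesis by simp
qed

lemma E3:
  fixes g :: "_ \<Rightarrow> _ \<Rightarrow> _ \<Rightarrow> real"
  assumes ind: "indep_var (S \<Otimes>\<^sub>M S) (\<lambda>\<omega>. (X \<omega>, X \<omega>)) (S \<Otimes>\<^sub>M S) (\<lambda>\<omega>. (Y \<omega>, Z \<omega>))"
    and ind2: "indep_var S Y S Z"
    and g: "(\<lambda>z. g (fst (fst z)) (fst (snd z)) (snd (snd z))) \<in> borel_measurable ((S \<Otimes>\<^sub>M S) \<Otimes>\<^sub>M (S \<Otimes>\<^sub>M S))"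
    and X: "X \<in> measurable M S"
  shows "(\<integral>\<omega>. g (X \<omega>) (Y \<omega>) (Z \<omega>) \<partial>M) =
    integral\<^sup>L (distr (distr M S X) (S \<Otimes>\<^sub>M S) (\<lambda>x. (x, x)) \<Otimes>\<^sub>M (distr M S Y \<Otimes>\<^sub>M distr M S Z))
      (\<lambda>z. g (fst (fst z)) (fst (snd z)) (snd (snd z)))"
proof -
  have "(\<integral>\<omega>. g (X \<omega>) (Y \<omega>) (Z \<omega>) \<partial>M) = (\<integral>\<omega>. (\<lambda>z. g (fst (fst z)) (fst (snd z)) (snd (snd z))) ((X \<omega>, X \<omega>), (Y \<omega>, Z \<omega>)) \<partial>M)"
    by simp
  also have "\<dots> = integral\<^sup>L (distr M (S \<Otimes>\<^sub>M S) (\<lambda>\<omega>. (X \<omega>, X \<omega>)) \<Otimes>\<^sub>M distr M (S \<Otimes>\<^sub>M S) (\<lambda>\<omega>. (Y \<omega>, Z \<omega>)))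
      (\<lambda>z. g (fst (fst z)) (fst (snd z)) (snd (snd z)))"
    by (rule indep_integral[OF ind g])
  also have "distr M (S \<Otimes>\<^sub>M S) (\<lambda>\<omega>. (X \<omega>, X \<omega>)) = distr (distr M S X) (S \<Otimes>\<^sub>M S) (\<lambda>x. (x, x))"
    using X by (subst distr_distr) (auto simp: comp_def)
  also have "distr M (S \<Otimes>\<^sub>M S) (\<lambda>\<omega>. (Y \<omega>, Z \<omega>)) = distr M S Y \<Otimes>\<^sub>M distr M S Z"
    by (rule indep_pair_pair[OF ind2])
  finally show ?thesis .
qed

lemma E2:
  fixes g :: "_ \<Rightarrow> _ \<Rightarrow> real"
  assumes ind: "indep_var S X S Y"
    and g: "(\<lambda>z. g (fst z) (snd z)) \<in> borel_measurable (S \<Otimes>\<^sub>M S)"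
  shows "(\<integral>\<omega>. g (X \<omega>) (Y \<omega>) \<partial>M) = integral\<^sup>L (distr M S X \<Otimes>\<^sub>M distr M S Y) (\<lambda>z. g (fst z) (snd z))"
  using indep_integral[OF ind g] by simp

lemma T4:
  assumes ind: "indep_vars (\<lambda>_. S) (case_sum D D') UNIV" and "i \<noteq> i'" "j \<noteq> j'"
    and f: "f \<in> borel_measurable (S \<Otimes>\<^sub>M S)" and g: "g \<in> borel_measurable (S \<Otimes>\<^sub>M S)"
  shows "indep_var borel (\<lambda>\<omega>. f (D i \<omega>, D' j \<omega>)) borel (\<lambda>\<omega>. g (D i' \<omega>, D' j' \<omega>))"
proof -
  have "indep_var borel (\<lambda>\<omega>. (\<lambda>h. f (h (Inl i), h (Inr j))) (restrict (\<lambda>k. case_sum D D' k \<omega>) {Inl i, Inr j}))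
                  borel (\<lambda>\<omega>. (\<lambda>h. g (h (Inl i'), h (Inr j'))) (restrict (\<lambda>k. case_sum D D' k \<omega>) {Inl i', Inr j'}))"
    using assms(2,3)
    by (intro indep_sub[OF ind] measurable_compose[OF _ f] measurable_compose[OF _ g] measurable_Pair
          measurable_component_singleton) auto
  then show ?thesis by simp
qed

end


lemma phi_w_meas2 [measurable]:
  "f \<in> N \<rightarrow>\<^sub>M obs_space Q \<Longrightarrow> g \<in> N \<rightarrow>\<^sub>M obs_space Q \<Longrightarrow>
   (\<lambda>z. phi_w Q kind (f z) (g z)) \<in> borel_measurable N"
  using measurable_compose[OF measurable_Pair phi_w_meas] by simp

lemma phi_l_meas2 [measurable]:
  "f \<in> N \<rightarrow>\<^sub>M obs_space Q \<Longrightarrow> g \<in> N \<rightarrow>\<^sub>M obs_space Q \<Longrightarrow>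
   (\<lambda>z. phi_l Q kind (f z) (g z)) \<in> borel_measurable N"
  using measurable_compose[OF measurable_Pair phi_l_meas] by simp

lemma sumif:
  fixes a b :: real
  assumes "j < N"
  shows "(\<Sum>j'<N. if j = j' then a else b) = a + (real N - 1) * b"
proof -
  have "(\<Sum>j'<N. if j = j' then a else b) = (\<Sum>j'<N. b + (if j = j' then a - b else 0))"
    by (intro sum.cong) auto
  also have "\<dots> = real N * b + (a - b)" using assms by (simp add: sum.distrib)
  finally show ?thesis by (simp add: algebra_simps)
qed

lemma strict_mono_upto:
  fixes m :: "nat \<Rightarrow> nat"
  assumes "\<And>k. k < K \<Longrightarrow> m k < m (Suc k)" "a < b" "b \<le> K"
  shows "m a < m b"
  using assms(2,3)
proof (induction b)
  case 0 then show ?case by simp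
next
  case (Suc b)
  have s: "m b < m (Suc b)" using Suc.prems assms(1) by simp
  show ?case
  proof (cases "a = b")
    case True then show ?thesis using s by simp
  next
    case False then have "a < b" using Suc.prems by simp
    then have "m a < m b" using Suc.IH Suc.prems by simp
    then show ?thesis using s by simp
  qed
qed

lemma lin4:
  fixes A :: "_ \<Rightarrow> real"
  assumes "integrable M A" "integrable M B" "integrable M C" "integrable M E"
  shows "(\<integral>\<omega>. A \<omega> - B \<omega> - C \<omega> + E \<omega> \<partial>M) = integral\<^sup>L M A - integral\<^sup>L M B - integral\<^sup>L M C + integral\<^sup>L M E"
  using assms by simp

lemma sum4:
  fixes f g :: "nat \<Rightarrow> nat \<Rightarrow> real"
  shows "(\<Sum>i\<in>A. \<Sum>j\<in>B. f i j) * (\<Sum>i'\<in>C. \<Sum>j'\<in>E. g i' j') =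
    (\<Sum>i\<in>A. \<Sum>j\<in>B. \<Sum>i'\<in>C. \<Sum>j'\<in>E. f i j * g i' j')"
  by (simp only: sum_distrib_right) (simp only: sum_distrib_left)

context prob_space begin

lemma integrable_bnd:
  fixes F :: "'a \<Rightarrow> real"
  assumes "F \<in> borel_measurable M" "\<And>\<omega>. \<bar>F \<omega>\<bar> \<le> B"
  shows "integrable M F"
  using assms by (intro integrable_const_bound[where B=B]) auto

lemma integrable_bnd2:
  fixes F G :: "'a \<Rightarrow> real"
  assumes "F \<in> borel_measurable M" "\<And>\<omega>. \<bar>F \<omega>\<bar> \<le> B1"
    "G \<in> borel_measurable M" "\<And>\<omega>. \<bar>G \<omega>\<bar> \<le> B2"
  shows "integrable M (\<lambda>\<omega>. F \<omega> * G \<omega>)"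
proof (rule integrable_bnd[where B="B1 * B2"])
  show "(\<lambda>\<omega>. F \<omega> * G \<omega>) \<in> borel_measurable M" using assms by simp
  fix \<omega>
  have "\<bar>F \<omega> * G \<omega>\<bar> = \<bar>F \<omega>\<bar> * \<bar>G \<omega>\<bar>" by (simp add: abs_mult)
  also have "\<dots> \<le> B1 * B2"
    using assms(2,4)[of \<omega>] by (intro mult_mono) (auto intro: order_trans[OF abs_ge_zero])
  finally show "\<bar>F \<omega> * G \<omega>\<bar> \<le> B1 * B2" .
qed

lemma cov_affine:
  fixes X Y :: "'a \<Rightarrow> real"
  assumes "integrable M X" "integrable M Y"
  shows "covariance (\<lambda>\<omega>. (X \<omega> - a) / s) (\<lambda>\<omega>. (Y \<omega> - b) / r) = covariance X Y / (s * r)"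
proof -
  have e1: "expectation (\<lambda>\<omega>. (X \<omega> - a) / s) = (expectation X - a) / s"
    using assms by (simp add: prob_space)
  have e2: "expectation (\<lambda>\<omega>. (Y \<omega> - b) / r) = (expectation Y - b) / r"
    using assms by (simp add: prob_space)
  have "(\<lambda>\<omega>. ((X \<omega> - a) / s - (expectation X - a) / s) * ((Y \<omega> - b) / r - (expectation Y - b) / r))
      = (\<lambda>\<omega>. (X \<omega> - expectation X) * (Y \<omega> - expectation Y) / (s * r))"
  proof (rule ext)
    fix \<omega>
    have 1: "(X \<omega> - a) / s - (expectation X - a) / s = (X \<omega> - expectation X) / s"
      by (simp add: diff_divide_distrib)
    have 2: "(Y \<omega> - b) / r - (expectation Y - b) / r = (Y \<omega> - expectation Y) / r"
      by (simp add: diff_divide_distrib)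
    show "((X \<omega> - a) / s - (expectation X - a) / s) * ((Y \<omega> - b) / r - (expectation Y - b) / r)
      = (X \<omega> - expectation X) * (Y \<omega> - expectation Y) / (s * r)"
      by (simp only: 1 2 times_divide_times_eq)
  qed
  then show ?thesis unfolding covariance_def e1 e2 by simp
qed

end

theorem proposition1:
  fixes M :: "'a measure"
    and Q K :: nat
    and kind :: "nat \<Rightarrow> outcome_kind"
    and D D' :: "nat \<Rightarrow> 'a \<Rightarrow> obs"
    and m n :: "nat \<Rightarrow> nat"
    and p q :: nat
  assumes prob: "prob_space M"
    and Q_pos: "1 \<le> Q"
    and margins: "\<And>r e. r \<in> {1..Q} \<Longrightarrow> kind r = Margin e \<Longrightarrow> 0 \<le> e"
    and meas_D: "\<And>i. D i \<in> measurable M (obs_space Q)"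
    and meas_D': "\<And>j. D' j \<in> measurable M (obs_space Q)"
    and indep: "prob_space.indep_vars M (\<lambda>_. obs_space Q) (case_sum D D') UNIV"
    and ident_D: "\<And>i. distr M (obs_space Q) (D i) = distr M (obs_space Q) (D 0)"
    and ident_D': "\<And>j. distr M (obs_space Q) (D' j) = distr M (obs_space Q) (D' 0)"
    and m0: "m 0 = 0" and n0: "n 0 = 0"
    and m_incr: "\<And>k. k < K \<Longrightarrow> m k < m (Suc k)"
    and n_incr: "\<And>k. k < K \<Longrightarrow> n k < n (Suc k)"
    and pq: "1 \<le> p" "p < q" "q \<le> K"
  defines "w \<equiv> phi_w Q kind" and "l \<equiv> phi_l Q kind"
  defines "xi10 \<equiv> (\<lambda>u v. prob_space.covariance M
              (\<lambda>\<omega>. u (D 0 \<omega>) (D' 0 \<omega>)) (\<lambda>\<omega>. v (D 0 \<omega>) (D' 1 \<omega>)))"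
    and "xi01 \<equiv> (\<lambda>u v. prob_space.covariance M
              (\<lambda>\<omega>. u (D 0 \<omega>) (D' 0 \<omega>)) (\<lambda>\<omega>. v (D 1 \<omega>) (D' 0 \<omega>)))"
    and "xi11 \<equiv> (\<lambda>u v. prob_space.covariance M
              (\<lambda>\<omega>. u (D 0 \<omega>) (D' 0 \<omega>)) (\<lambda>\<omega>. v (D 0 \<omega>) (D' 0 \<omega>)))"
  defines "tau \<equiv> (\<lambda>\<nu>. prob_space.expectation M (\<lambda>\<omega>. \<nu> (D 0 \<omega>) (D' 0 \<omega>)))"
  defines "U \<equiv> (\<lambda>\<nu> k \<omega>. (1 / (real (m k) * real (n k))) *
              (\<Sum>i<m k. \<Sum>j<n k. \<nu> (D i \<omega>) (D' j \<omega>)))"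
  defines "dU \<equiv> (\<lambda>k \<omega>. U w k \<omega> - U l k \<omega>)"
    and "dtau \<equiv> tau w - tau l"
  defines "V \<equiv> (\<lambda>k. (real (n k) - 1) / (real (m k) * real (n k)) *
                   (xi10 w w + xi10 l l - 2 * xi10 w l)
                 + (real (m k) - 1) / (real (m k) * real (n k)) *
                   (xi01 w w + xi01 l l - 2 * xi01 w l)
                 + 1 / (real (m k) * real (n k)) *
                   (xi11 w w + xi11 l l - 2 * xi11 w l))"
  defines "Dstat \<equiv> (\<lambda>k \<omega>. (dU k \<omega> - dtau) / sqrt (V k))"
  assumes V_pos: "\<And>k. k \<in> {1..K} \<Longrightarrow> V k > 0"
  shows "prob_space.covariance M (dU p) (dU q) = V q \<and>
         prob_space.covariance M (Dstat p) (Dstat q) = sqrt (V q / V p)"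
proof -
  interpret P: prob_space M by (rule prob)
  define S where "S = obs_space Q"
  have ind: "P.indep_vars (\<lambda>_. S) (case_sum D D') UNIV" using indep by (simp add: S_def)
  have mD [measurable]: "D i \<in> M \<rightarrow>\<^sub>M S" for i using meas_D by (simp add: S_def)
  have mD' [measurable]: "D' j \<in> M \<rightarrow>\<^sub>M S" for j using meas_D' by (simp add: S_def)
  define \<mu> where "\<mu> = distr M S (D 0)"
  define \<nu> where "\<nu> = distr M S (D' 0)"
  have dD: "distr M S (D i) = \<mu>" for i using ident_D by (simp add: S_def \<mu>_def)
  have dD': "distr M S (D' j) = \<nu>" for j using ident_D' by (simp add: S_def \<nu>_def)
  have wm [measurable]: "(\<lambda>z. w (f z) (g z)) \<in> borel_measurable N"
    if "f \<in> N \<rightarrow>\<^sub>M S" "g \<in> N \<rightarrow>\<^sub>M S" for f g and N :: "'c measure"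
    using phi_w_meas2[OF that[unfolded S_def]] by (simp add: w_def)
  have lm [measurable]: "(\<lambda>z. l (f z) (g z)) \<in> borel_measurable N"
    if "f \<in> N \<rightarrow>\<^sub>M S" "g \<in> N \<rightarrow>\<^sub>M S" for f g and N :: "'c measure"
    using phi_l_meas2[OF that[unfolded S_def]] by (simp add: l_def)
  have wb: "\<bar>w x y\<bar> \<le> real Q" for x y using phi_w_bnd by (simp add: w_def)
  have lb: "\<bar>l x y\<bar> \<le> real Q" for x y using phi_l_bnd by (simp add: l_def)

  define \<phi> where "\<phi> = (\<lambda>x y. w x y - l x y)"
  have \<phi>m [measurable]: "(\<lambda>z. \<phi> (f z) (g z)) \<in> borel_measurable N"
    if "f \<in> N \<rightarrow>\<^sub>M S" "g \<in> N \<rightarrow>\<^sub>M S" for f g and N :: "'c measure"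
    unfolding \<phi>_def using wm[OF that] lm[OF that] by simp
  have \<phi>b: "\<bar>\<phi> x y\<bar> \<le> 2 * real Q" for x y
    using wb[of x y] lb[of x y] unfolding \<phi>_def by linarith
  have intg: "integrable M F" if "F \<in> borel_measurable M" "\<And>\<omega>. \<bar>F \<omega>\<bar> \<le> B" for F :: "'a \<Rightarrow> real" and B
    using P.integrable_bnd[OF that] .
  have intg2: "integrable M (\<lambda>\<omega>. F \<omega> * G \<omega>)"
    if "F \<in> borel_measurable M" "\<And>\<omega>. \<bar>F \<omega>\<bar> \<le> B1" "G \<in> borel_measurable M" "\<And>\<omega>. \<bar>G \<omega>\<bar> \<le> B2"
    for F G :: "'a \<Rightarrow> real" and B1 B2
    using P.integrable_bnd2[OF that] .

  have e2: "P.expectation (\<lambda>\<omega>. u (D i \<omega>) (D' j \<omega>)) = P.expectation (\<lambda>\<omega>. u (D 0 \<omega>) (D' 0 \<omega>))"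
    if "(\<lambda>z. u (fst z) (snd z)) \<in> borel_measurable (S \<Otimes>\<^sub>M S)" for u :: "obs \<Rightarrow> obs \<Rightarrow> real" and i j
    using P.E2[OF P.T2[OF ind, of i j] that] P.E2[OF P.T2[OF ind, of 0 0] that] by (simp add: dD dD')
  have e3a: "P.expectation (\<lambda>\<omega>. g (D i \<omega>) (D' j \<omega>) (D' j' \<omega>)) = P.expectation (\<lambda>\<omega>. g (D 0 \<omega>) (D' 0 \<omega>) (D' 1 \<omega>))"
    if "j \<noteq> j'" "(\<lambda>z. g (fst (fst z)) (fst (snd z)) (snd (snd z))) \<in> borel_measurable ((S \<Otimes>\<^sub>M S) \<Otimes>\<^sub>M (S \<Otimes>\<^sub>M S))"
    for g :: "obs \<Rightarrow> obs \<Rightarrow> obs \<Rightarrow> real" and i j j'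
    using P.E3[OF P.T3a[OF ind that(1)] P.T3a'[OF ind that(1)] that(2) mD]
      P.E3[OF P.T3a[OF ind, of 0 1 0] P.T3a'[OF ind, of 0 1] that(2) mD] by (simp add: dD dD')
  have e3b: "P.expectation (\<lambda>\<omega>. g (D' j \<omega>) (D i \<omega>) (D i' \<omega>)) = P.expectation (\<lambda>\<omega>. g (D' 0 \<omega>) (D 0 \<omega>) (D 1 \<omega>))"
    if "i \<noteq> i'" "(\<lambda>z. g (fst (fst z)) (fst (snd z)) (snd (snd z))) \<in> borel_measurable ((S \<Otimes>\<^sub>M S) \<Otimes>\<^sub>M (S \<Otimes>\<^sub>M S))"
    for g :: "obs \<Rightarrow> obs \<Rightarrow> obs \<Rightarrow> real" and i i' j
    using P.E3[OF P.T3b[OF ind that(1)] P.T3b'[OF ind that(1)] that(2) mD']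
      P.E3[OF P.T3b[OF ind, of 0 1 0] P.T3b'[OF ind, of 0 1] that(2) mD'] by (simp add: dD dD')
  have e4: "P.expectation (\<lambda>\<omega>. f (D i \<omega>) (D' j \<omega>) * g (D i' \<omega>) (D' j' \<omega>)) =
      P.expectation (\<lambda>\<omega>. f (D i \<omega>) (D' j \<omega>)) * P.expectation (\<lambda>\<omega>. g (D i' \<omega>) (D' j' \<omega>))"
    if "i \<noteq> i'" "j \<noteq> j'" "(\<lambda>z. f (fst z) (snd z)) \<in> borel_measurable (S \<Otimes>\<^sub>M S)"
      "(\<lambda>z. g (fst z) (snd z)) \<in> borel_measurable (S \<Otimes>\<^sub>M S)"
      "integrable M (\<lambda>\<omega>. f (D i \<omega>) (D' j \<omega>))" "integrable M (\<lambda>\<omega>. g (D i' \<omega>) (D' j' \<omega>))"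
    for f g :: "obs \<Rightarrow> obs \<Rightarrow> real" and i j i' j'
    using P.indep_var_lebesgue_integral[OF P.T4[OF ind that(1,2,3,4)]] that(5,6) by simp

  define tw where "tw = tau w"
  define tl where "tl = tau l"
  define t where "t = tw - tl"
  have dtau_t: "dtau = t" by (simp add: dtau_def t_def tw_def tl_def)
  have intw: "integrable M (\<lambda>\<omega>. w (D i \<omega>) (D' j \<omega>))" for i j
    by (rule intg[OF _ wb]) simp
  have intl: "integrable M (\<lambda>\<omega>. l (D i \<omega>) (D' j \<omega>))" for i j
    by (rule intg[OF _ lb]) simp
  have int\<phi>: "integrable M (\<lambda>\<omega>. \<phi> (D i \<omega>) (D' j \<omega>))" for i j
    by (rule intg[OF _ \<phi>b]) simp
  have Ew: "P.expectation (\<lambda>\<omega>. w (D i \<omega>) (D' j \<omega>)) = tw" for i j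
    using e2[of "w" i j] by (simp add: tw_def tau_def)
  have El: "P.expectation (\<lambda>\<omega>. l (D i \<omega>) (D' j \<omega>)) = tl" for i j
    using e2[of "l" i j] by (simp add: tl_def tau_def)
  have E\<phi>: "P.expectation (\<lambda>\<omega>. \<phi> (D i \<omega>) (D' j \<omega>)) = t" for i j
    using Ew[of i j] El[of i j] intw[of i j] intl[of i j] by (simp add: \<phi>_def t_def)

  define Phi where "Phi i j \<omega> = \<phi> (D i \<omega>) (D' j \<omega>) - t" for i j \<omega>
  have Phim [measurable]: "Phi i j \<in> borel_measurable M" for i j
    unfolding Phi_def[abs_def] by measurable
  have Pb: "\<bar>Phi i j \<omega>\<bar> \<le> 2 * real Q + \<bar>t\<bar>" for i j \<omega>
    using \<phi>b[of "D i \<omega>" "D' j \<omega>"] unfolding Phi_def by linarith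
  have intP: "integrable M (Phi i j)" for i j by (rule intg[OF Phim Pb])
  have EP: "P.expectation (Phi i j) = 0" for i j
  proof -
    have "P.expectation (Phi i j) = P.expectation (\<lambda>\<omega>. \<phi> (D i \<omega>) (D' j \<omega>)) - P.expectation (\<lambda>\<omega>. t)"
      unfolding Phi_def[abs_def] by (intro Bochner_Integration.integral_diff int\<phi>) simp
    then show ?thesis using E\<phi>[of i j] by (simp add: P.prob_space)
  qed
  define C11 where "C11 = P.expectation (\<lambda>\<omega>. Phi 0 0 \<omega> * Phi 0 0 \<omega>)"
  define C10 where "C10 = P.expectation (\<lambda>\<omega>. Phi 0 0 \<omega> * Phi 0 1 \<omega>)"
  define C01 where "C01 = P.expectation (\<lambda>\<omega>. Phi 0 0 \<omega> * Phi 1 0 \<omega>)"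
  have Kc: "P.expectation (\<lambda>\<omega>. Phi i j \<omega> * Phi i' j' \<omega>) =
      (if i = i' then if j = j' then C11 else C10 else if j = j' then C01 else 0)" for i j i' j'
  proof (cases "i = i'")
    case True
    note ii = True
    show ?thesis
    proof (cases "j = j'")
      case True
      have "(\<lambda>z. (\<phi> (fst z) (snd z) - t) * (\<phi> (fst z) (snd z) - t)) \<in> borel_measurable (S \<Otimes>\<^sub>M S)"
        by measurable
      from e2[OF this, of i j] show ?thesis using ii True by (simp add: Phi_def C11_def)
    next
      case False
      have "(\<lambda>z. (\<phi> (fst (fst z)) (fst (snd z)) - t) * (\<phi> (fst (fst z)) (snd (snd z)) - t))
          \<in> borel_measurable ((S \<Otimes>\<^sub>M S) \<Otimes>\<^sub>M (S \<Otimes>\<^sub>M S))"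
        by measurable
      from e3a[OF False this, of i] show ?thesis using ii False by (simp add: Phi_def C10_def)
    qed
  next
    case False
    note ii = False
    show ?thesis
    proof (cases "j = j'")
      case True
      have "(\<lambda>z. (\<phi> (fst (snd z)) (fst (fst z)) - t) * (\<phi> (snd (snd z)) (fst (fst z)) - t))
          \<in> borel_measurable ((S \<Otimes>\<^sub>M S) \<Otimes>\<^sub>M (S \<Otimes>\<^sub>M S))"
        by measurable
      from e3b[OF ii this, of j] show ?thesis using ii True by (simp add: Phi_def C01_def)
    next
      case False
      have m1: "(\<lambda>z. \<phi> (fst z) (snd z) - t) \<in> borel_measurable (S \<Otimes>\<^sub>M S)" by measurable
      have "P.expectation (\<lambda>\<omega>. Phi i j \<omega> * Phi i' j' \<omega>) = P.expectation (Phi i j) * P.expectation (Phi i' j')"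
        using e4[OF ii False m1 m1] intP[of i j] intP[of i' j'] by (simp add: Phi_def[abs_def])
      then show ?thesis using ii False EP by simp
    qed
  qed

  have wtb: "\<bar>w x y - tw\<bar> \<le> real Q + \<bar>tw\<bar>" for x y using wb[of x y] by linarith
  have ltb: "\<bar>l x y - tl\<bar> \<le> real Q + \<bar>tl\<bar>" for x y using lb[of x y] by linarith
  define A where "A i j \<omega> = w (D i \<omega>) (D' j \<omega>) - tw" for i j \<omega>
  define B where "B i j \<omega> = l (D i \<omega>) (D' j \<omega>) - tl" for i j \<omega>
  have Am [measurable]: "A i j \<in> borel_measurable M" for i j unfolding A_def[abs_def] by measurable
  have Bm [measurable]: "B i j \<in> borel_measurable M" for i j unfolding B_def[abs_def] by measurable
  have Ab: "\<bar>A i j \<omega>\<bar> \<le> real Q + \<bar>tw\<bar>" for i j \<omega> unfolding A_def by (rule wtb)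
  have Bb: "\<bar>B i j \<omega>\<bar> \<le> real Q + \<bar>tl\<bar>" for i j \<omega> unfolding B_def by (rule ltb)
  have iAA: "integrable M (\<lambda>\<omega>. A i j \<omega> * A i' j' \<omega>)" for i j i' j' by (rule intg2[OF Am Ab Am Ab])
  have iAB: "integrable M (\<lambda>\<omega>. A i j \<omega> * B i' j' \<omega>)" for i j i' j' by (rule intg2[OF Am Ab Bm Bb])
  have iBA: "integrable M (\<lambda>\<omega>. B i j \<omega> * A i' j' \<omega>)" for i j i' j' by (rule intg2[OF Bm Bb Am Ab])
  have iBB: "integrable M (\<lambda>\<omega>. B i j \<omega> * B i' j' \<omega>)" for i j i' j' by (rule intg2[OF Bm Bb Bm Bb])
  have PAB: "Phi i j \<omega> = A i j \<omega> - B i j \<omega>" for i j \<omega>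
    by (simp add: Phi_def A_def B_def \<phi>_def t_def)
  have Eexp: "P.expectation (\<lambda>\<omega>. Phi i j \<omega> * Phi i' j' \<omega>) =
      P.expectation (\<lambda>\<omega>. A i j \<omega> * A i' j' \<omega>) - P.expectation (\<lambda>\<omega>. A i j \<omega> * B i' j' \<omega>)
      - P.expectation (\<lambda>\<omega>. B i j \<omega> * A i' j' \<omega>) + P.expectation (\<lambda>\<omega>. B i j \<omega> * B i' j' \<omega>)" for i j i' j'
  proof -
    have "(\<lambda>\<omega>. Phi i j \<omega> * Phi i' j' \<omega>) = (\<lambda>\<omega>. A i j \<omega> * A i' j' \<omega> - A i j \<omega> * B i' j' \<omega>
        - B i j \<omega> * A i' j' \<omega> + B i j \<omega> * B i' j' \<omega>)"
      by (simp add: fun_eq_iff PAB algebra_simps)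
    then show ?thesis using lin4[OF iAA iAB iBA iBB] by simp
  qed
  have x10ww: "xi10 w w = P.expectation (\<lambda>\<omega>. A 0 0 \<omega> * A 0 1 \<omega>)"
    by (simp add: xi10_def P.covariance_def Ew A_def)
  have x10ll: "xi10 l l = P.expectation (\<lambda>\<omega>. B 0 0 \<omega> * B 0 1 \<omega>)"
    by (simp add: xi10_def P.covariance_def El B_def)
  have x10wl: "xi10 w l = P.expectation (\<lambda>\<omega>. A 0 0 \<omega> * B 0 1 \<omega>)"
    by (simp add: xi10_def P.covariance_def Ew El A_def B_def)
  have x01ww: "xi01 w w = P.expectation (\<lambda>\<omega>. A 0 0 \<omega> * A 1 0 \<omega>)"
    by (simp add: xi01_def P.covariance_def Ew A_def)
  have x01ll: "xi01 l l = P.expectation (\<lambda>\<omega>. B 0 0 \<omega> * B 1 0 \<omega>)"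
    by (simp add: xi01_def P.covariance_def El B_def)
  have x01wl: "xi01 w l = P.expectation (\<lambda>\<omega>. A 0 0 \<omega> * B 1 0 \<omega>)"
    by (simp add: xi01_def P.covariance_def Ew El A_def B_def)
  have x11ww: "xi11 w w = P.expectation (\<lambda>\<omega>. A 0 0 \<omega> * A 0 0 \<omega>)"
    by (simp add: xi11_def P.covariance_def Ew A_def)
  have x11ll: "xi11 l l = P.expectation (\<lambda>\<omega>. B 0 0 \<omega> * B 0 0 \<omega>)"
    by (simp add: xi11_def P.covariance_def El B_def)
  have x11wl: "xi11 w l = P.expectation (\<lambda>\<omega>. A 0 0 \<omega> * B 0 0 \<omega>)"
    by (simp add: xi11_def P.covariance_def Ew El A_def B_def)
  have s10: "P.expectation (\<lambda>\<omega>. B 0 0 \<omega> * A 0 1 \<omega>) = P.expectation (\<lambda>\<omega>. A 0 0 \<omega> * B 0 1 \<omega>)"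
  proof -
    have meas: "(\<lambda>z. (l (fst (fst z)) (fst (snd z)) - tl) * (w (fst (fst z)) (snd (snd z)) - tw))
        \<in> borel_measurable ((S \<Otimes>\<^sub>M S) \<Otimes>\<^sub>M (S \<Otimes>\<^sub>M S))" by measurable
    have "P.expectation (\<lambda>\<omega>. (l (D 0 \<omega>) (D' 1 \<omega>) - tl) * (w (D 0 \<omega>) (D' 0 \<omega>) - tw)) =
        P.expectation (\<lambda>\<omega>. (l (D 0 \<omega>) (D' 0 \<omega>) - tl) * (w (D 0 \<omega>) (D' 1 \<omega>) - tw))"
      using e3a[of 1 0 _ 0, OF _ meas] by simp
    then show ?thesis by (simp add: A_def B_def mult.commute)
  qed
  have s01: "P.expectation (\<lambda>\<omega>. B 0 0 \<omega> * A 1 0 \<omega>) = P.expectation (\<lambda>\<omega>. A 0 0 \<omega> * B 1 0 \<omega>)"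
  proof -
    have meas: "(\<lambda>z. (l (fst (snd z)) (fst (fst z)) - tl) * (w (snd (snd z)) (fst (fst z)) - tw))
        \<in> borel_measurable ((S \<Otimes>\<^sub>M S) \<Otimes>\<^sub>M (S \<Otimes>\<^sub>M S))" by measurable
    have "P.expectation (\<lambda>\<omega>. (l (D 1 \<omega>) (D' 0 \<omega>) - tl) * (w (D 0 \<omega>) (D' 0 \<omega>) - tw)) =
        P.expectation (\<lambda>\<omega>. (l (D 0 \<omega>) (D' 0 \<omega>) - tl) * (w (D 1 \<omega>) (D' 0 \<omega>) - tw))"
      using e3b[of 1 0 _ 0, OF _ meas] by simp
    then show ?thesis by (simp add: A_def B_def mult.commute)
  qed
  have X10: "xi10 w w + xi10 l l - 2 * xi10 w l = C10"
    using Eexp[of 0 0 0 1] s10 unfolding C10_def x10ww x10ll x10wl by simp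
  have X01: "xi01 w w + xi01 l l - 2 * xi01 w l = C01"
    using Eexp[of 0 0 1 0] s01 unfolding C01_def x01ww x01ll x01wl by simp
  have X11: "xi11 w w + xi11 l l - 2 * xi11 w l = C11"
    using Eexp[of 0 0 0 0] unfolding C11_def x11ww x11ll x11wl by (simp add: mult.commute)

  define c where "c k = 1 / (real (m k) * real (n k))" for k
  have mpos: "0 < m k" "0 < n k" if "1 \<le> k" "k \<le> K" for k
    using strict_mono_upto[of K m 0 k, OF m_incr] strict_mono_upto[of K n 0 k, OF n_incr] that m0 n0
    by auto
  have mle: "m p \<le> m q" "n p \<le> n q"
    using strict_mono_upto[of K m p q, OF m_incr] strict_mono_upto[of K n p q, OF n_incr] pq by auto
  have kp: "1 \<le> p" "p \<le> K" and kq: "1 \<le> q" "q \<le> K" using pq by auto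
  have dUf: "dU k \<omega> = c k * (\<Sum>i<m k. \<Sum>j<n k. \<phi> (D i \<omega>) (D' j \<omega>))" for k \<omega>
    by (simp add: dU_def U_def c_def \<phi>_def sum_subtractf right_diff_distrib)
  have dUc: "dU k \<omega> = t + c k * (\<Sum>i<m k. \<Sum>j<n k. Phi i j \<omega>)" if "1 \<le> k" "k \<le> K" for k \<omega>
  proof -
    have "(\<Sum>i<m k. \<Sum>j<n k. Phi i j \<omega>) = (\<Sum>i<m k. \<Sum>j<n k. \<phi> (D i \<omega>) (D' j \<omega>)) - real (m k) * real (n k) * t"
      by (simp add: Phi_def sum_subtractf)
    then show ?thesis using mpos[OF that] by (simp add: dUf c_def field_simps)
  qed
  have dUfun: "dU k = (\<lambda>\<omega>. t + c k * (\<Sum>i<m k. \<Sum>j<n k. Phi i j \<omega>))" if "1 \<le> k" "k \<le> K" for k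
    using dUc[OF that] by (simp add: fun_eq_iff)
  have intdU: "integrable M (dU k)" if "1 \<le> k" "k \<le> K" for k
    unfolding dUfun[OF that] using intP by (simp add: integrable_sum)
  have EdU: "P.expectation (dU k) = t" if "1 \<le> k" "k \<le> K" for k
    unfolding dUfun[OF that] using intP EP by (simp add: integrable_sum P.prob_space)
  have iPP: "integrable M (\<lambda>\<omega>. Phi i j \<omega> * Phi i' j' \<omega>)" for i j i' j'
    by (rule intg2[OF Phim Pb Phim Pb])
  have in1: "(\<Sum>j'<n q. (if i = i' then if j = j' then C11 else C10 else if j = j' then C01 else 0))
      = (if i = i' then C11 + (real (n q) - 1) * C10 else C01)" if "j < n q" for i i' j
    using sumif[OF that, of C11 C10] sumif[OF that, of C01 0] by (cases "i = i'") auto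
  have in2: "(\<Sum>i'<m q. \<Sum>j'<n q. (if i = i' then if j = j' then C11 else C10 else if j = j' then C01 else 0))
      = C11 + (real (n q) - 1) * C10 + (real (m q) - 1) * C01" if "i < m q" "j < n q" for i j
  proof -
    have "(\<Sum>i'<m q. \<Sum>j'<n q. (if i = i' then if j = j' then C11 else C10 else if j = j' then C01 else 0))
      = (\<Sum>i'<m q. if i = i' then C11 + (real (n q) - 1) * C10 else C01)"
      by (rule sum.cong[OF refl]) (rule in1[OF that(2)])
    also have "\<dots> = C11 + (real (n q) - 1) * C10 + (real (m q) - 1) * C01"
      by (rule sumif[OF that(1)])
    finally show ?thesis .
  qed
  have cov: "P.covariance (dU p) (dU q) = c q * (C11 + (real (n q) - 1) * C10 + (real (m q) - 1) * C01)"
  proof -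
    have "P.covariance (dU p) (dU q) = P.expectation (\<lambda>\<omega>. (dU p \<omega> - t) * (dU q \<omega> - t))"
      by (simp add: P.covariance_def EdU[OF kp] EdU[OF kq])
    also have "(\<lambda>\<omega>. (dU p \<omega> - t) * (dU q \<omega> - t)) = (\<lambda>\<omega>. c p * c q *
        (\<Sum>i<m p. \<Sum>j<n p. \<Sum>i'<m q. \<Sum>j'<n q. Phi i j \<omega> * Phi i' j' \<omega>))"
      by (simp add: fun_eq_iff dUc[OF kp] dUc[OF kq] sum4[symmetric])
    also have "P.expectation \<dots> = c p * c q *
        (\<Sum>i<m p. \<Sum>j<n p. \<Sum>i'<m q. \<Sum>j'<n q. P.expectation (\<lambda>\<omega>. Phi i j \<omega> * Phi i' j' \<omega>))"
      using iPP by (simp add: integrable_sum)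
    also have "(\<Sum>i<m p. \<Sum>j<n p. \<Sum>i'<m q. \<Sum>j'<n q. P.expectation (\<lambda>\<omega>. Phi i j \<omega> * Phi i' j' \<omega>))
        = (\<Sum>i<m p. \<Sum>j<n p. C11 + (real (n q) - 1) * C10 + (real (m q) - 1) * C01)"
      unfolding Kc using mle by (intro sum.cong refl in2) auto
    also have "c p * c q * \<dots> = c q * (C11 + (real (n q) - 1) * C10 + (real (m q) - 1) * C01)"
      using mpos[OF kp] by (simp add: c_def)
    finally show ?thesis .
  qed
  have Vq: "V q = c q * (C11 + (real (n q) - 1) * C10 + (real (m q) - 1) * C01)"
    unfolding V_def X10 X01 X11 c_def using mpos[OF kq] by (simp add: field_simps)
  have cov1: "P.covariance (dU p) (dU q) = V q" using cov Vq by simp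
  have Vp0: "V p > 0" using V_pos kp by auto
  have Vq0: "V q > 0" using V_pos kq by auto
  have "Dstat k = (\<lambda>\<omega>. (dU k \<omega> - dtau) / sqrt (V k))" for k by (simp add: Dstat_def)
  then have "P.covariance (Dstat p) (Dstat q) = P.covariance (dU p) (dU q) / (sqrt (V p) * sqrt (V q))"
    using P.cov_affine[OF intdU[OF kp] intdU[OF kq]] by simp
  also have "\<dots> = sqrt (V q) / sqrt (V p)"
  proof -
    have sq: "sqrt (V q) * sqrt (V q) = V q" using Vq0 by simp
    have "sqrt (V p) > 0" "sqrt (V q) > 0" using Vp0 Vq0 by auto
    then show ?thesis unfolding cov1 by (subst sq[symmetric]) (simp add: field_simps)
  qed
  also have "\<dots> = sqrt (V q / V p)" by (simp add: real_sqrt_divide)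
  finally show ?thesis using cov1 by simp
qed

end
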